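(* Let $(M,\phi,\xi,\eta,g)$ be a $(2n+1)$-dimensional Kenmotsu manifold which has cyclic Ricci tensor, i.e. $(\nabla_XS)(Y,Z)+(\nabla_YS)(Z,X)+(\nabla_ZS)(X,Y)=0$ for all vector fields $X,Y,Z$, and whose metric $g$ is a conformal $\eta$-Einstein soliton, i.e. $$(\mathcal{L}_\xi g)(X,Y)+2S(X,Y)+\Big[2\lambda-r+\Big(p+\frac{2}{2n+1}\Big)\Big]g(X,Y)+2\mu\,\eta(X)\eta(Y)=0$$ for all vector fields $X,Y$ on $M$, where $\lambda,\mu$ are real constants. Then the scalar curvature is $r=\big(p+\frac{2}{2n+1}\big)-4n+2\lambda+2$.
   Context: An almost contact metric manifold $(M,\phi,\xi,\eta,g)$ of dimension $2n+1$ consists of a $(1,1)$-tensor field $\phi$, a vector field $\xi$, a 1-form $\eta$ and a Riemannian metric $g$ with $\phi^2X=-X+\eta(X)\xi$, $\eta(\xi)=1$, $\eta\circ\phi=0$, $\phi\xi=0$, $g(\phi X,\phi Y)=g(X,Y)-\eta(X)\eta(Y)$, $g(X,\xi)=\eta(X)$. It is a Kenmotsu manifold if, with $\nabla$ the Levi-Civita connection of $g$, $(\nabla_X\phi)Y=-g(X,\phi Y)\xi-\eta(Y)\phi X$ and $\nabla_X\xi=X-\eta(X)\xi$ for all vector fields $X,Y$. $S$ denotes the Ricci tensor, $r$ the scalar curvature of $g$, $\mathcal{L}_\xi$ the Lie derivative along $\xi$, and $p$ is a scalar non-dynamical field (a time-dependent scalar field). *)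

theory Defs
  imports "HOL-Analysis.Analysis"
begin

text \<open>Local-coordinate model of a Riemannian manifold: an open set U of real^'n
  (a coordinate chart), points x, vector fields real^'n => real^'n, and tensor fields
  given by their component matrices.\<close>

definition pd :: "'n::finite \<Rightarrow> (real^'n \<Rightarrow> real) \<Rightarrow> real^'n \<Rightarrow> real" where
  "pd k f x = frechet_derivative f (at x) (axis k 1)"

fun iter_pd :: "'n::finite list \<Rightarrow> (real^'n \<Rightarrow> real) \<Rightarrow> real^'n \<Rightarrow> real" where
  "iter_pd [] f = f"
| "iter_pd (k # ks) f = pd k (iter_pd ks f)"

definition smooth_fun :: "(real^'n::finite) set \<Rightarrow> (real^'n \<Rightarrow> real) \<Rightarrow> bool" where
  "smooth_fun U f \<longleftrightarrow> (\<forall>ks. iter_pd ks f differentiable_on U)"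

definition smooth_vf :: "(real^'n::finite) set \<Rightarrow> (real^'n \<Rightarrow> real^'n) \<Rightarrow> bool" where
  "smooth_vf U X \<longleftrightarrow> (\<forall>i. smooth_fun U (\<lambda>x. X x $ i))"

definition smooth_tensor :: "(real^'n::finite) set \<Rightarrow> (real^'n \<Rightarrow> real^'n^'n) \<Rightarrow> bool" where
  "smooth_tensor U A \<longleftrightarrow> (\<forall>i j. smooth_fun U (\<lambda>x. A x $ i $ j))"

definition dder :: "(real^'n::finite \<Rightarrow> real^'n) \<Rightarrow> (real^'n \<Rightarrow> real) \<Rightarrow> real^'n \<Rightarrow> real" where
  "dder X f x = (\<Sum>i\<in>UNIV. X x $ i * pd i f x)"

definition E :: "'n::finite \<Rightarrow> real^'n \<Rightarrow> real^'n" where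
  "E k = (\<lambda>x. axis k 1)"

definition gval :: "(real^'n::finite \<Rightarrow> real^'n^'n) \<Rightarrow> real^'n \<Rightarrow> real^'n \<Rightarrow> real^'n \<Rightarrow> real" where
  "gval g x u v = (\<Sum>i\<in>UNIV. \<Sum>j\<in>UNIV. g x $ i $ j * u $ i * v $ j)"

definition riemannian_metric :: "(real^'n::finite) set \<Rightarrow> (real^'n \<Rightarrow> real^'n^'n) \<Rightarrow> bool" where
  "riemannian_metric U g \<longleftrightarrow> smooth_tensor U g \<and>
     (\<forall>x\<in>U. \<forall>i j. g x $ i $ j = g x $ j $ i) \<and>
     (\<forall>x\<in>U. \<forall>u. u \<noteq> 0 \<longrightarrow> gval g x u u > 0)"

definition christoffel :: "(real^'n::finite \<Rightarrow> real^'n^'n) \<Rightarrow> 'n \<Rightarrow> 'n \<Rightarrow> 'n \<Rightarrow> real^'n \<Rightarrow> real" where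
  "christoffel g k i j x = (1/2) * (\<Sum>l\<in>UNIV. matrix_inv (g x) $ k $ l *
      (pd i (\<lambda>y. g y $ j $ l) x + pd j (\<lambda>y. g y $ i $ l) x - pd l (\<lambda>y. g y $ i $ j) x))"

definition nabla :: "(real^'n::finite \<Rightarrow> real^'n^'n) \<Rightarrow> (real^'n \<Rightarrow> real^'n) \<Rightarrow> (real^'n \<Rightarrow> real^'n) \<Rightarrow> real^'n \<Rightarrow> real^'n" where
  "nabla g X Y x = (\<chi> k. dder X (\<lambda>y. Y y $ k) x
      + (\<Sum>i\<in>UNIV. \<Sum>j\<in>UNIV. christoffel g k i j x * X x $ i * Y x $ j))"

definition lie :: "(real^'n::finite \<Rightarrow> real^'n) \<Rightarrow> (real^'n \<Rightarrow> real^'n) \<Rightarrow> real^'n \<Rightarrow> real^'n" where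
  "lie X Y x = (\<chi> k. dder X (\<lambda>y. Y y $ k) x - dder Y (\<lambda>y. X y $ k) x)"

definition curv :: "(real^'n::finite \<Rightarrow> real^'n^'n) \<Rightarrow> (real^'n \<Rightarrow> real^'n) \<Rightarrow> (real^'n \<Rightarrow> real^'n) \<Rightarrow> (real^'n \<Rightarrow> real^'n) \<Rightarrow> real^'n \<Rightarrow> real^'n" where
  "curv g X Y Z x = nabla g X (nabla g Y Z) x - nabla g Y (nabla g X Z) x - nabla g (lie X Y) Z x"

definition ricci :: "(real^'n::finite \<Rightarrow> real^'n^'n) \<Rightarrow> (real^'n \<Rightarrow> real^'n) \<Rightarrow> (real^'n \<Rightarrow> real^'n) \<Rightarrow> real^'n \<Rightarrow> real" where
  "ricci g Y Z x = (\<Sum>k\<in>UNIV. curv g (E k) Y Z x $ k)"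

definition scal :: "(real^'n::finite \<Rightarrow> real^'n^'n) \<Rightarrow> real^'n \<Rightarrow> real" where
  "scal g x = (\<Sum>i\<in>UNIV. \<Sum>j\<in>UNIV. matrix_inv (g x) $ i $ j * ricci g (E i) (E j) x)"

definition nabla_ricci :: "(real^'n::finite \<Rightarrow> real^'n^'n) \<Rightarrow> (real^'n \<Rightarrow> real^'n) \<Rightarrow> (real^'n \<Rightarrow> real^'n) \<Rightarrow> (real^'n \<Rightarrow> real^'n) \<Rightarrow> real^'n \<Rightarrow> real" where
  "nabla_ricci g X Y Z x = dder X (ricci g Y Z) x - ricci g (nabla g X Y) Z x - ricci g Y (nabla g X Z) x"

definition lie_g :: "(real^'n::finite \<Rightarrow> real^'n^'n) \<Rightarrow> (real^'n \<Rightarrow> real^'n) \<Rightarrow> (real^'n \<Rightarrow> real^'n) \<Rightarrow> (real^'n \<Rightarrow> real^'n) \<Rightarrow> real^'n \<Rightarrow> real" where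
  "lie_g g V X Y x = dder V (\<lambda>y. gval g y (X y) (Y y)) x
      - gval g x (lie V X x) (Y x) - gval g x (X x) (lie V Y x)"

text \<open>Almost contact metric structure (phi, xi, eta, g) on U; phi acts by phi x *v u,
  eta is given by a covector field: eta(u) = eta x \<bullet> u.\<close>
definition almost_contact_metric ::
  "(real^'n::finite) set \<Rightarrow> (real^'n \<Rightarrow> real^'n^'n) \<Rightarrow> (real^'n \<Rightarrow> real^'n) \<Rightarrow> (real^'n \<Rightarrow> real^'n) \<Rightarrow> (real^'n \<Rightarrow> real^'n^'n) \<Rightarrow> bool" where
  "almost_contact_metric U phi xi eta g \<longleftrightarrow>
     riemannian_metric U g \<and> smooth_tensor U phi \<and> smooth_vf U xi \<and> smooth_vf U eta \<and>
     (\<forall>x\<in>U.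
        (\<forall>u. phi x *v (phi x *v u) = - u + (eta x \<bullet> u) *\<^sub>R xi x) \<and>
        eta x \<bullet> xi x = 1 \<and>
        (\<forall>u. eta x \<bullet> (phi x *v u) = 0) \<and>
        phi x *v xi x = 0 \<and>
        (\<forall>u v. gval g x (phi x *v u) (phi x *v v) = gval g x u v - (eta x \<bullet> u) * (eta x \<bullet> v)) \<and>
        (\<forall>u. gval g x u (xi x) = eta x \<bullet> u))"

definition kenmotsu ::
  "(real^'n::finite) set \<Rightarrow> (real^'n \<Rightarrow> real^'n^'n) \<Rightarrow> (real^'n \<Rightarrow> real^'n) \<Rightarrow> (real^'n \<Rightarrow> real^'n) \<Rightarrow> (real^'n \<Rightarrow> real^'n^'n) \<Rightarrow> bool" where
  "kenmotsu U phi xi eta g \<longleftrightarrow> almost_contact_metric U phi xi eta g \<and>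
     (\<forall>X Y. smooth_vf U X \<longrightarrow> smooth_vf U Y \<longrightarrow> (\<forall>x\<in>U.
        nabla g X (\<lambda>y. phi y *v Y y) x - phi x *v nabla g X Y x
          = - (gval g x (X x) (phi x *v Y x)) *\<^sub>R xi x - (eta x \<bullet> Y x) *\<^sub>R (phi x *v X x))) \<and>
     (\<forall>X. smooth_vf U X \<longrightarrow> (\<forall>x\<in>U. nabla g X xi x = X x - (eta x \<bullet> X x) *\<^sub>R xi x))"

definition cyclic_ricci :: "(real^'n::finite) set \<Rightarrow> (real^'n \<Rightarrow> real^'n^'n) \<Rightarrow> bool" where
  "cyclic_ricci U g \<longleftrightarrow> (\<forall>X Y Z. smooth_vf U X \<longrightarrow> smooth_vf U Y \<longrightarrow> smooth_vf U Z \<longrightarrow>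
     (\<forall>x\<in>U. nabla_ricci g X Y Z x + nabla_ricci g Y Z X x + nabla_ricci g Z X Y x = 0))"

definition conformal_eta_einstein_soliton ::
  "(real^'n::finite) set \<Rightarrow> nat \<Rightarrow> (real^'n \<Rightarrow> real^'n) \<Rightarrow> (real^'n \<Rightarrow> real^'n) \<Rightarrow> (real^'n \<Rightarrow> real^'n^'n)
   \<Rightarrow> real \<Rightarrow> real \<Rightarrow> (real^'n \<Rightarrow> real) \<Rightarrow> bool" where
  "conformal_eta_einstein_soliton U n xi eta g lam mu p \<longleftrightarrow>
     (\<forall>X Y. smooth_vf U X \<longrightarrow> smooth_vf U Y \<longrightarrow> (\<forall>x\<in>U.
        lie_g g xi X Y x + 2 * ricci g X Y x
        + (2 * lam - scal g x + (p x + 2 / (2 * real n + 1))) * gval g x (X x) (Y x)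
        + 2 * mu * (eta x \<bullet> X x) * (eta x \<bullet> Y x) = 0))"

end

theory Submission
  imports Defs
begin


lemma pd_has: "(f has_derivative f') (at x) \<Longrightarrow> pd k f x = f' (axis k 1)"
  unfolding pd_def using frechet_derivative_at by metis

lemma diff_has: "f differentiable (at x) \<Longrightarrow> (f has_derivative (frechet_derivative f (at x))) (at x)"
  using frechet_derivative_works by blast

lemma diff_local:
  assumes "open U" "x \<in> U" "\<And>y. y \<in> U \<Longrightarrow> f y = h y" "f differentiable (at x)"
  shows "h differentiable (at x)"
  using assms has_derivative_transform_within_open[where f=f and g=h and s=U and x=x and t=UNIV]
  unfolding differentiable_def by blast

lemma pd_local:
  assumes "open U" "x \<in> U" "\<And>y. y \<in> U \<Longrightarrow> f y = h y"
  shows "pd k f x = pd k h x"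
proof -
  have "(\<lambda>D. (f has_derivative D) (at x)) = (\<lambda>D. (h has_derivative D) (at x))"
    using has_derivative_transform_within_open[where f=f and g=h and s=U and x=x and t=UNIV]
       has_derivative_transform_within_open[where f=h and g=f and s=U and x=x and t=UNIV] assms
    by (auto intro!: ext)
  then show ?thesis unfolding pd_def frechet_derivative_def by simp
qed

lemma pd_const[simp]: "pd k (\<lambda>y. c) x = 0"
  unfolding pd_def by simp

lemma pd_add:
  assumes "f differentiable (at x)" "h differentiable (at x)"
  shows "pd k (\<lambda>y. f y + h y) x = pd k f x + pd k h x"
  using pd_has[OF has_derivative_add[OF diff_has[OF assms(1)] diff_has[OF assms(2)]]]
    pd_has[OF diff_has[OF assms(1)]] pd_has[OF diff_has[OF assms(2)]] by simp

lemma pd_diff: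
  assumes "f differentiable (at x)" "h differentiable (at x)"
  shows "pd k (\<lambda>y. f y - h y) x = pd k f x - pd k h x"
  using pd_has[OF has_derivative_diff[OF diff_has[OF assms(1)] diff_has[OF assms(2)]]]
    pd_has[OF diff_has[OF assms(1)]] pd_has[OF diff_has[OF assms(2)]] by simp

lemma pd_uminus:
  assumes "f differentiable (at x)"
  shows "pd k (\<lambda>y. - f y) x = - pd k f x"
  using pd_has[OF has_derivative_minus[OF diff_has[OF assms(1)]]]
    pd_has[OF diff_has[OF assms(1)]] by simp

lemma pd_mult:
  assumes "f differentiable (at x)" "h differentiable (at x)"
  shows "pd k (\<lambda>y. f y * h y) x = pd k f x * h x + f x * pd k h x"
  using pd_has[OF has_derivative_mult[OF diff_has[OF assms(1)] diff_has[OF assms(2)]]]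
    pd_has[OF diff_has[OF assms(1)]] pd_has[OF diff_has[OF assms(2)]] by simp

lemma pd_cmult:
  assumes "f differentiable (at x)"
  shows "pd k (\<lambda>y. c * f y) x = c * pd k f x"
  using pd_mult[OF differentiable_const assms, of k c] by simp

lemma pd_sum:
  assumes "finite I" "\<And>i. i \<in> I \<Longrightarrow> f i differentiable (at x)"
  shows "pd k (\<lambda>y. \<Sum>i\<in>I. f i y) x = (\<Sum>i\<in>I. pd k (f i) x)"
  using assms
proof (induction I rule: finite_induct)
  case empty then show ?case by simp
next
  case (insert a I)
  have d: "(\<lambda>y. \<Sum>i\<in>I. f i y) differentiable (at x)"
    using insert by (intro differentiable_sum) auto
  have "pd k (\<lambda>y. \<Sum>i\<in>insert a I. f i y) x = pd k (\<lambda>y. f a y + (\<Sum>i\<in>I. f i y)) x"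
    using insert by simp
  also have "\<dots> = pd k (f a) x + pd k (\<lambda>y. \<Sum>i\<in>I. f i y) x"
    using pd_add[OF _ d, of "f a"] insert by simp
  finally show ?case using insert by simp
qed

lemma pd_inverse:
  assumes "h differentiable (at x)" "h x \<noteq> 0"
  shows "pd k (\<lambda>y. 1 / h y) x = - pd k h x / (h x * h x)"
proof -
  let ?H = "frechet_derivative h (at x)"
  have "((\<lambda>y. inverse (h y)) has_derivative (\<lambda>v. - (inverse (h x) * ?H v * inverse (h x)))) (at x)"
    using Deriv.has_derivative_inverse[OF assms(2) diff_has[OF assms(1)]] .
  then have "((\<lambda>y. 1 / h y) has_derivative (\<lambda>v. - (inverse (h x) * ?H v * inverse (h x)))) (at x)"
    by (simp add: inverse_eq_divide)
  then have "pd k (\<lambda>y. 1 / h y) x = - (inverse (h x) * ?H (axis k 1) * inverse (h x))"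
    by (rule pd_has)
  moreover have "pd k h x = ?H (axis k 1)" by (rule pd_has[OF diff_has[OF assms(1)]])
  ultimately show ?thesis using assms(2) by (simp add: divide_inverse)
qed

lemma diff_on_at: "open U \<Longrightarrow> f differentiable_on U \<Longrightarrow> y \<in> U \<Longrightarrow> f differentiable (at y)"
  by (simp add: differentiable_on_eq_differentiable_at)

fun Ck :: "nat \<Rightarrow> (real^'n::finite) set \<Rightarrow> (real^'n \<Rightarrow> real) \<Rightarrow> bool" where
  "Ck 0 U f = (f differentiable_on U)"
| "Ck (Suc m) U f = (f differentiable_on U \<and> (\<forall>k. Ck m U (pd k f)))"

lemma iter_pd_snoc: "iter_pd (ks @ [k]) f = iter_pd ks (pd k f)"
  by (induction ks) auto

lemma Ck_iff: "Ck m U f \<longleftrightarrow> (\<forall>ks. length ks \<le> m \<longrightarrow> iter_pd ks f differentiable_on U)"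
proof (induction m arbitrary: f)
  case 0 then show ?case by auto
next
  case (Suc m)
  show ?case
  proof
    assume H: "Ck (Suc m) U f"
    show "\<forall>ks. length ks \<le> Suc m \<longrightarrow> iter_pd ks f differentiable_on U"
    proof (intro allI impI)
      fix ks :: "'a list" assume l: "length ks \<le> Suc m"
      show "iter_pd ks f differentiable_on U"
      proof (cases ks rule: rev_cases)
        case Nil then show ?thesis using H by simp
      next
        case (snoc ys k)
        then show ?thesis using H Suc.IH[of "pd k f"] l by (simp add: iter_pd_snoc)
      qed
    qed
  next
    assume H: "\<forall>ks. length ks \<le> Suc m \<longrightarrow> iter_pd ks f differentiable_on U"
    have "f differentiable_on U" using H[rule_format, of "[]"] by simp
    moreover have "Ck m U (pd k f)" for k
      unfolding Suc.IH
    proof (intro allI impI)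
      fix ks :: "'a list" assume "length ks \<le> m"
      then show "iter_pd ks (pd k f) differentiable_on U"
        using H[rule_format, of "ks @ [k]"] by (simp add: iter_pd_snoc)
    qed
    ultimately show "Ck (Suc m) U f" by simp
  qed
qed

lemma smooth_fun_Ck: "smooth_fun U f \<longleftrightarrow> (\<forall>m. Ck m U f)"
  unfolding smooth_fun_def Ck_iff by (metis le_refl)

lemma Ck_diff_on: "Ck m U f \<Longrightarrow> f differentiable_on U"
  by (cases m) auto

lemma Ck_mono: "Ck (Suc m) U f \<Longrightarrow> Ck m U f"
  by (induction m arbitrary: f) auto

lemma diff_on_local:
  assumes "open U" "\<And>y. y \<in> U \<Longrightarrow> f y = h y" "f differentiable_on U"
  shows "h differentiable_on U"
  using assms diff_local[of U _ f h] by (simp add: differentiable_on_eq_differentiable_at)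

lemma Ck_local:
  assumes "open U" "\<And>y. y \<in> U \<Longrightarrow> f y = h y" "Ck m U f"
  shows "Ck m U h"
  using assms
proof (induction m arbitrary: f h)
  case 0 then show ?case using diff_on_local by auto
next
  case (Suc m)
  have "Ck m U (pd k h)" for k
    using Suc.IH[of "pd k f" "pd k h"] Suc.prems pd_local[of U _ f h k] by auto
  moreover have "h differentiable_on U" using diff_on_local[OF Suc.prems(1,2)] Suc.prems(3) by simp
  ultimately show ?case by simp
qed

lemma Ck_const: "Ck m U (\<lambda>y. c)"
proof (induction m arbitrary: c)
  case 0 then show ?case by simp
next
  case (Suc m)
  have eq: "pd k (\<lambda>y. c) = (\<lambda>y. 0)" for k by (rule ext) simp
  have "Ck m U (pd k (\<lambda>y. c))" for k unfolding eq by (rule Suc.IH)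
  then show ?case by simp
qed

lemma Ck_add:
  assumes "open U" "Ck m U f" "Ck m U h"
  shows "Ck m U (\<lambda>y. f y + h y)"
  using assms(2,3)
proof (induction m arbitrary: f h)
  case 0 then show ?case by (auto intro: differentiable_on_add)
next
  case (Suc m)
  have "Ck m U (pd k (\<lambda>y. f y + h y))" for k
  proof -
    have pf: "Ck m U (pd k f)" and ph: "Ck m U (pd k h)" using Suc.prems by auto
    have c1: "Ck m U (\<lambda>y. pd k f y + pd k h y)" by (rule Suc.IH[OF pf ph])
    have c2: "pd k f y + pd k h y = pd k (\<lambda>y. f y + h y) y" if "y \<in> U" for y
    proof -
      have "f differentiable (at y)" "h differentiable (at y)"
        using diff_on_at[OF assms(1) Ck_diff_on that] Suc.prems by blast+
      from pd_add[OF this, of k] show ?thesis by simp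
    qed
    show ?thesis by (rule Ck_local[OF assms(1) c2 c1])
  qed
  moreover have "(\<lambda>y. f y + h y) differentiable_on U"
    using Ck_diff_on[OF Suc.prems(1)] Ck_diff_on[OF Suc.prems(2)] by (rule differentiable_on_add)
  ultimately show ?case by (simp only: Ck.simps) blast
qed

lemma Ck_mult:
  assumes "open U" "Ck m U f" "Ck m U h"
  shows "Ck m U (\<lambda>y. f y * h y)"
  using assms(2,3)
proof (induction m arbitrary: f h)
  case 0 then show ?case by (auto intro: differentiable_on_mult)
next
  case (Suc m)
  have fm: "Ck m U f" and hm: "Ck m U h" using Suc.prems Ck_mono by blast+
  have "Ck m U (pd k (\<lambda>y. f y * h y))" for k
  proof -
    have pf: "Ck m U (pd k f)" and ph: "Ck m U (pd k h)" using Suc.prems by auto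
    have c1: "Ck m U (\<lambda>y. pd k f y * h y + f y * pd k h y)"
      by (rule Ck_add[OF assms(1) Suc.IH[OF pf hm] Suc.IH[OF fm ph]])
    have c2: "pd k f y * h y + f y * pd k h y = pd k (\<lambda>y. f y * h y) y" if "y \<in> U" for y
    proof -
      have "f differentiable (at y)" "h differentiable (at y)"
        using diff_on_at[OF assms(1) Ck_diff_on that] Suc.prems by blast+
      from pd_mult[OF this, of k] show ?thesis by simp
    qed
    show ?thesis by (rule Ck_local[OF assms(1) c2 c1])
  qed
  moreover have "(\<lambda>y. f y * h y) differentiable_on U"
    using Ck_diff_on[OF Suc.prems(1)] Ck_diff_on[OF Suc.prems(2)] by (rule differentiable_on_mult)
  ultimately show ?case by (simp only: Ck.simps) blast
qed

lemma diff_on_inverse: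
  fixes h :: "real^'n::finite \<Rightarrow> real"
  assumes "open U" "h differentiable_on U" "\<And>y. y \<in> U \<Longrightarrow> h y \<noteq> 0"
  shows "(\<lambda>y. 1 / h y) differentiable_on U"
proof -
  have "(\<lambda>y. 1 / h y) differentiable (at y)" if "y \<in> U" for y
    using differentiable_divide[OF differentiable_const diff_on_at[OF assms(1,2) that] assms(3)[OF that], of 1] .
  then show ?thesis using assms(1) by (simp add: differentiable_on_eq_differentiable_at)
qed

lemma Ck_inverse:
  assumes "open U" "Ck m U h" "\<And>y. y \<in> U \<Longrightarrow> h y \<noteq> 0"
  shows "Ck m U (\<lambda>y. 1 / h y)"
  using assms(2)
proof (induction m)
  case 0 then show ?case using diff_on_inverse[OF assms(1) Ck_diff_on[OF 0] assms(3)] by simp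
next
  case (Suc m)
  have IH: "Ck m U (\<lambda>y. 1 / h y)" using Suc Ck_mono by blast
  have "Ck m U (pd k (\<lambda>y. 1 / h y))" for k
  proof -
    have c1: "Ck m U (\<lambda>y. ((-1) * pd k h y) * ((1 / h y) * (1 / h y)))"
      using Suc.prems IH Ck_const by (intro Ck_mult[OF assms(1)]) auto
    have c2: "((-1) * pd k h y) * ((1 / h y) * (1 / h y)) = pd k (\<lambda>y. 1 / h y) y" if "y \<in> U" for y
    proof -
      have "h differentiable (at y)" using Suc.prems that assms(1) by (simp add: differentiable_on_eq_differentiable_at)
      from pd_inverse[OF this assms(3)[OF that], of k]
      have e: "pd k (\<lambda>y. 1 / h y) y = - pd k h y / (h y * h y)" .
      show ?thesis unfolding e by (simp add: divide_inverse)
    qed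
    show ?thesis by (rule Ck_local[OF assms(1) c2 c1])
  qed
  moreover have "(\<lambda>y. 1 / h y) differentiable_on U"
    by (rule diff_on_inverse[OF assms(1) Ck_diff_on[OF Suc.prems] assms(3)])
  ultimately show ?case by (simp only: Ck.simps) blast
qed

lemma Ck_sum:
  assumes "open U" "finite I" "\<And>i. i \<in> I \<Longrightarrow> Ck m U (f i)"
  shows "Ck m U (\<lambda>y. \<Sum>i\<in>I. f i y)"
  using assms(2,3)
proof (induction I rule: finite_induct)
  case empty then show ?case using Ck_const[of m U 0] by simp
next
  case (insert a I)
  have "Ck m U (\<lambda>y. f a y + (\<Sum>i\<in>I. f i y))"
    using insert by (intro Ck_add[OF assms(1)]) auto
  then show ?case using insert by simp
qed

lemma Ck_prod:
  assumes "open U" "finite I" "\<And>i. i \<in> I \<Longrightarrow> Ck m U (f i)"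
  shows "Ck m U (\<lambda>y. \<Prod>i\<in>I. f i y)"
  using assms(2,3)
proof (induction I rule: finite_induct)
  case empty then show ?case using Ck_const[of m U 1] by simp
next
  case (insert a I)
  have "Ck m U (\<lambda>y. f a y * (\<Prod>i\<in>I. f i y))"
    using insert by (intro Ck_mult[OF assms(1)]) auto
  then show ?case using insert by simp
qed

lemma smooth_const: "smooth_fun U (\<lambda>y. c)"
  unfolding smooth_fun_Ck using Ck_const by blast

lemma smooth_add: "open U \<Longrightarrow> smooth_fun U f \<Longrightarrow> smooth_fun U h \<Longrightarrow> smooth_fun U (\<lambda>y. f y + h y)"
  unfolding smooth_fun_Ck using Ck_add by blast

lemma smooth_mult: "open U \<Longrightarrow> smooth_fun U f \<Longrightarrow> smooth_fun U h \<Longrightarrow> smooth_fun U (\<lambda>y. f y * h y)"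
  unfolding smooth_fun_Ck using Ck_mult by blast

lemma smooth_cmult: "open U \<Longrightarrow> smooth_fun U f \<Longrightarrow> smooth_fun U (\<lambda>y. c * f y)"
  using smooth_mult[OF _ smooth_const] by blast

lemma smooth_uminus: "open U \<Longrightarrow> smooth_fun U f \<Longrightarrow> smooth_fun U (\<lambda>y. - f y)"
  using smooth_cmult[of U f "-1"] by simp

lemma smooth_diff: "open U \<Longrightarrow> smooth_fun U f \<Longrightarrow> smooth_fun U h \<Longrightarrow> smooth_fun U (\<lambda>y. f y - h y)"
  using smooth_add[OF _ _ smooth_uminus, of U f h] by simp

lemma smooth_sum: "open U \<Longrightarrow> finite I \<Longrightarrow> (\<And>i. i \<in> I \<Longrightarrow> smooth_fun U (f i)) \<Longrightarrow> smooth_fun U (\<lambda>y. \<Sum>i\<in>I. f i y)"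
  unfolding smooth_fun_Ck using Ck_sum by blast

lemma smooth_prod: "open U \<Longrightarrow> finite I \<Longrightarrow> (\<And>i. i \<in> I \<Longrightarrow> smooth_fun U (f i)) \<Longrightarrow> smooth_fun U (\<lambda>y. \<Prod>i\<in>I. f i y)"
  unfolding smooth_fun_Ck using Ck_prod by blast

lemma smooth_inverse: "open U \<Longrightarrow> smooth_fun U h \<Longrightarrow> (\<And>y. y \<in> U \<Longrightarrow> h y \<noteq> 0) \<Longrightarrow> smooth_fun U (\<lambda>y. 1 / h y)"
  unfolding smooth_fun_Ck using Ck_inverse by blast

lemma smooth_divide: "open U \<Longrightarrow> smooth_fun U f \<Longrightarrow> smooth_fun U h \<Longrightarrow> (\<And>y. y \<in> U \<Longrightarrow> h y \<noteq> 0) \<Longrightarrow> smooth_fun U (\<lambda>y. f y / h y)"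
  using smooth_mult[OF _ _ smooth_inverse, of U f h] by simp

lemma smooth_pd: "smooth_fun U f \<Longrightarrow> smooth_fun U (pd k f)"
  unfolding smooth_fun_Ck by (metis Ck.simps(2))

lemma smooth_local: "open U \<Longrightarrow> (\<And>y. y \<in> U \<Longrightarrow> f y = h y) \<Longrightarrow> smooth_fun U f \<Longrightarrow> smooth_fun U h"
  unfolding smooth_fun_Ck using Ck_local by blast

lemma smooth_at: "open U \<Longrightarrow> smooth_fun U f \<Longrightarrow> y \<in> U \<Longrightarrow> f differentiable (at y)"
  unfolding smooth_fun_Ck using Ck_diff_on diff_on_at by blast



lemma gval_mv: "gval g x u v = (\<Sum>i\<in>UNIV. u $ i * (g x *v v) $ i)"
  unfolding gval_def matrix_vector_mult_def
  by (simp add: sum_distrib_left mult.commute mult.left_commute)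

lemma metric_invertible:
  assumes "riemannian_metric U g" "x \<in> U"
  shows "invertible (g x)"
proof -
  have "\<forall>u. g x *v u = 0 \<longrightarrow> u = 0"
  proof (intro allI impI)
    fix u assume "g x *v u = 0"
    then have "gval g x u u = 0" unfolding gval_mv by simp
    then show "u = 0" using assms unfolding riemannian_metric_def by force
  qed
  then show ?thesis unfolding invertible_left_inverse matrix_left_invertible_ker .
qed

lemma matrix_inv_works:
  fixes A :: "real^'n::finite^'n"
  assumes "invertible A"
  shows "A ** matrix_inv A = mat 1" "matrix_inv A ** A = mat 1"
  using someI_ex[OF assms[unfolded invertible_def]] unfolding matrix_inv_def by auto

lemma matrix_inv_cramer:
  fixes A :: "real^'n::finite^'n"
  assumes "invertible A"
  shows "matrix_inv A $ i $ j = det (\<chi> a b. if b = i then axis j 1 $ a else A $ a $ b) / det A"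
proof -
  let ?B = "matrix_inv A"
  have d: "det A \<noteq> 0" using assms invertible_det_nz by blast
  have "A *v (?B *v axis j 1) = axis j 1"
    by (simp add: matrix_vector_mul_assoc matrix_inv_works(1)[OF assms])
  then have "?B *v axis j 1 = (\<chi> k. det (\<chi> a b. if b = k then axis j 1 $ a else A $ a $ b) / det A)"
    using cramer[OF d] by blast
  then have "(?B *v axis j 1) $ i = det (\<chi> a b. if b = i then axis j 1 $ a else A $ a $ b) / det A"
    by simp
  moreover have "(?B *v axis j 1) $ i = ?B $ i $ j"
    by (simp add: matrix_vector_mult_def axis_def if_distrib cong: if_cong)
  ultimately show ?thesis by simp
qed

lemma smooth_det:
  assumes "open U" "\<And>i j. smooth_fun U (\<lambda>y. M y $ i $ j)"
  shows "smooth_fun U (\<lambda>y. det (M y :: real^'n::finite^'n))"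
  unfolding det_def
  by (intro smooth_sum[OF assms(1)] smooth_cmult[OF assms(1)] smooth_prod[OF assms(1)] assms(2) finite_permutations finite)

lemma ginv_smooth:
  assumes "open U" "riemannian_metric U g"
  shows "smooth_fun U (\<lambda>y. matrix_inv (g y) $ i $ j)"
proof -
  have gs: "smooth_fun U (\<lambda>y. g y $ a $ b)" for a b
    using assms(2) unfolding riemannian_metric_def smooth_tensor_def by blast
  have s1: "smooth_fun U (\<lambda>y. det (\<chi> a b. if b = i then axis j 1 $ a else g y $ a $ b))"
    apply (rule smooth_det[OF assms(1)])
    subgoal for a b by (cases "b = i") (simp_all add: smooth_const gs)
    done
  have s2: "smooth_fun U (\<lambda>y. det (g y))"
    by (rule smooth_det[OF assms(1) gs])
  have nz: "det (g y) \<noteq> 0" if "y \<in> U" for y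
    using metric_invertible[OF assms(2) that] invertible_det_nz by blast
  show ?thesis
    by (rule smooth_local[OF assms(1) _ smooth_divide[OF assms(1) s1 s2 nz]])
       (simp add: matrix_inv_cramer[OF metric_invertible[OF assms(2)]])
qed

lemma metric_smooth:
  assumes "riemannian_metric U g"
  shows "smooth_fun U (\<lambda>y. g y $ a $ b)"
  using assms unfolding riemannian_metric_def smooth_tensor_def by blast

lemma christoffel_smooth:
  assumes "open U" "riemannian_metric U g"
  shows "smooth_fun U (christoffel g k i j)"
proof -
  have "smooth_fun U (\<lambda>x. (1/2) * (\<Sum>l\<in>UNIV. matrix_inv (g x) $ k $ l *
      (pd i (\<lambda>y. g y $ j $ l) x + pd j (\<lambda>y. g y $ i $ l) x - pd l (\<lambda>y. g y $ i $ j) x)))"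
    by (intro smooth_cmult[OF assms(1)] smooth_sum[OF assms(1)] smooth_mult[OF assms(1)]
        smooth_add[OF assms(1)] smooth_diff[OF assms(1)] smooth_pd metric_smooth[OF assms(2)]
        ginv_smooth[OF assms] finite)
  then show ?thesis unfolding christoffel_def[abs_def] .
qed

lemma vf_smooth: "smooth_vf U X \<Longrightarrow> smooth_fun U (\<lambda>x. X x $ i)"
  unfolding smooth_vf_def by blast

lemma dder_smooth:
  assumes "open U" "smooth_vf U X" "smooth_fun U f"
  shows "smooth_fun U (dder X f)"
proof -
  have "smooth_fun U (\<lambda>x. \<Sum>i\<in>UNIV. X x $ i * pd i f x)"
    by (intro smooth_sum[OF assms(1)] smooth_mult[OF assms(1)] vf_smooth[OF assms(2)] smooth_pd assms(3) finite)
  then show ?thesis unfolding dder_def[abs_def] .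
qed

lemma nabla_smooth:
  assumes "open U" "riemannian_metric U g" "smooth_vf U X" "smooth_vf U Y"
  shows "smooth_vf U (nabla g X Y)"
  unfolding smooth_vf_def
proof
  fix k
  have "smooth_fun U (\<lambda>x. dder X (\<lambda>y. Y y $ k) x
      + (\<Sum>i\<in>UNIV. \<Sum>j\<in>UNIV. christoffel g k i j x * X x $ i * Y x $ j))"
    by (intro smooth_add[OF assms(1)] dder_smooth[OF assms(1,3)] vf_smooth[OF assms(4)]
        smooth_sum[OF assms(1)] smooth_mult[OF assms(1)] christoffel_smooth[OF assms(1,2)]
        vf_smooth[OF assms(3)] finite)
  then show "smooth_fun U (\<lambda>x. nabla g X Y x $ k)" unfolding nabla_def by simp
qed

lemma lie_smooth:
  assumes "open U" "smooth_vf U X" "smooth_vf U Y"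
  shows "smooth_vf U (lie X Y)"
  unfolding smooth_vf_def
proof
  fix k
  have "smooth_fun U (\<lambda>x. dder X (\<lambda>y. Y y $ k) x - dder Y (\<lambda>y. X y $ k) x)"
    by (intro smooth_diff[OF assms(1)] dder_smooth[OF assms(1)] vf_smooth assms(2,3))
  then show "smooth_fun U (\<lambda>x. lie X Y x $ k)" unfolding lie_def by simp
qed

lemma const_vf: "smooth_vf U (\<lambda>y. w)"
  unfolding smooth_vf_def using smooth_const by blast



lemma Q1_form:
  fixes G :: "'n::finite \<Rightarrow> 'n \<Rightarrow> real"
  shows "(\<Sum>i\<in>UNIV. \<Sum>j\<in>UNIV. G i j * (\<Sum>a\<in>UNIV. \<Sum>b\<in>UNIV. T i a b * p a * q b) * r j)
     = (\<Sum>a\<in>UNIV. \<Sum>b\<in>UNIV. \<Sum>j\<in>UNIV. p a * q b * r j * (\<Sum>i\<in>UNIV. G i j * T i a b))"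
proof -
  have "(\<Sum>i\<in>UNIV. \<Sum>j\<in>UNIV. G i j * (\<Sum>a\<in>UNIV. \<Sum>b\<in>UNIV. T i a b * p a * q b) * r j)
     = (\<Sum>i\<in>UNIV. \<Sum>j\<in>UNIV. \<Sum>a\<in>UNIV. \<Sum>b\<in>UNIV. p a * q b * r j * (G i j * T i a b))"
    by (simp add: sum_distrib_left sum_distrib_right mult_ac)
  also have "\<dots> = (\<Sum>j\<in>UNIV. \<Sum>i\<in>UNIV. \<Sum>a\<in>UNIV. \<Sum>b\<in>UNIV. p a * q b * r j * (G i j * T i a b))"
    by (rule sum.swap)
  also have "\<dots> = (\<Sum>j\<in>UNIV. \<Sum>a\<in>UNIV. \<Sum>i\<in>UNIV. \<Sum>b\<in>UNIV. p a * q b * r j * (G i j * T i a b))"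
    by (rule sum.cong[OF refl], rule sum.swap)
  also have "\<dots> = (\<Sum>j\<in>UNIV. \<Sum>a\<in>UNIV. \<Sum>b\<in>UNIV. \<Sum>i\<in>UNIV. p a * q b * r j * (G i j * T i a b))"
    by (rule sum.cong[OF refl], rule sum.cong[OF refl], rule sum.swap)
  also have "\<dots> = (\<Sum>a\<in>UNIV. \<Sum>j\<in>UNIV. \<Sum>b\<in>UNIV. \<Sum>i\<in>UNIV. p a * q b * r j * (G i j * T i a b))"
    by (rule sum.swap)
  also have "\<dots> = (\<Sum>a\<in>UNIV. \<Sum>b\<in>UNIV. \<Sum>j\<in>UNIV. \<Sum>i\<in>UNIV. p a * q b * r j * (G i j * T i a b))"
    by (rule sum.cong[OF refl], rule sum.swap)
  also have "\<dots> = (\<Sum>a\<in>UNIV. \<Sum>b\<in>UNIV. \<Sum>j\<in>UNIV. p a * q b * r j * (\<Sum>i\<in>UNIV. G i j * T i a b))"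
    by (simp add: sum_distrib_left)
  finally show ?thesis .
qed

lemma Q2_form:
  fixes G :: "'n::finite \<Rightarrow> 'n \<Rightarrow> real"
  shows "(\<Sum>i\<in>UNIV. \<Sum>j\<in>UNIV. G i j * s i * (\<Sum>a\<in>UNIV. \<Sum>b\<in>UNIV. T j a b * p a * q b))
     = (\<Sum>a\<in>UNIV. \<Sum>i\<in>UNIV. \<Sum>b\<in>UNIV. p a * s i * q b * (\<Sum>j\<in>UNIV. G i j * T j a b))"
proof -
  have "(\<Sum>i\<in>UNIV. \<Sum>j\<in>UNIV. G i j * s i * (\<Sum>a\<in>UNIV. \<Sum>b\<in>UNIV. T j a b * p a * q b))
     = (\<Sum>i\<in>UNIV. \<Sum>j\<in>UNIV. \<Sum>a\<in>UNIV. \<Sum>b\<in>UNIV. p a * s i * q b * (G i j * T j a b))"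
    by (simp add: sum_distrib_left sum_distrib_right mult_ac)
  also have "\<dots> = (\<Sum>i\<in>UNIV. \<Sum>a\<in>UNIV. \<Sum>j\<in>UNIV. \<Sum>b\<in>UNIV. p a * s i * q b * (G i j * T j a b))"
    by (rule sum.cong[OF refl], rule sum.swap)
  also have "\<dots> = (\<Sum>i\<in>UNIV. \<Sum>a\<in>UNIV. \<Sum>b\<in>UNIV. \<Sum>j\<in>UNIV. p a * s i * q b * (G i j * T j a b))"
    by (rule sum.cong[OF refl], rule sum.cong[OF refl], rule sum.swap)
  also have "\<dots> = (\<Sum>a\<in>UNIV. \<Sum>i\<in>UNIV. \<Sum>b\<in>UNIV. \<Sum>j\<in>UNIV. p a * s i * q b * (G i j * T j a b))"
    by (rule sum.swap)
  also have "\<dots> = (\<Sum>a\<in>UNIV. \<Sum>i\<in>UNIV. \<Sum>b\<in>UNIV. p a * s i * q b * (\<Sum>j\<in>UNIV. G i j * T j a b))"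
    by (simp add: sum_distrib_left)
  finally show ?thesis .
qed

lemma P1_form:
  fixes G :: "'n::finite \<Rightarrow> 'n \<Rightarrow> real"
  shows "(\<Sum>i\<in>UNIV. \<Sum>j\<in>UNIV. G i j * (\<Sum>a\<in>UNIV. p a * D a i) * r j)
     = (\<Sum>a\<in>UNIV. p a * (\<Sum>i\<in>UNIV. \<Sum>j\<in>UNIV. G i j * D a i * r j))"
proof -
  have "(\<Sum>i\<in>UNIV. \<Sum>j\<in>UNIV. G i j * (\<Sum>a\<in>UNIV. p a * D a i) * r j)
     = (\<Sum>i\<in>UNIV. \<Sum>j\<in>UNIV. \<Sum>a\<in>UNIV. p a * (G i j * D a i * r j))"
    by (simp add: sum_distrib_left sum_distrib_right mult_ac)
  also have "\<dots> = (\<Sum>i\<in>UNIV. \<Sum>a\<in>UNIV. \<Sum>j\<in>UNIV. p a * (G i j * D a i * r j))"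
    by (rule sum.cong[OF refl], rule sum.swap)
  also have "\<dots> = (\<Sum>a\<in>UNIV. \<Sum>i\<in>UNIV. \<Sum>j\<in>UNIV. p a * (G i j * D a i * r j))"
    by (rule sum.swap)
  also have "\<dots> = (\<Sum>a\<in>UNIV. p a * (\<Sum>i\<in>UNIV. \<Sum>j\<in>UNIV. G i j * D a i * r j))"
    by (simp add: sum_distrib_left)
  finally show ?thesis .
qed

lemma P2_form:
  fixes G :: "'n::finite \<Rightarrow> 'n \<Rightarrow> real"
  shows "(\<Sum>i\<in>UNIV. \<Sum>j\<in>UNIV. G i j * s i * (\<Sum>a\<in>UNIV. p a * D a j))
     = (\<Sum>a\<in>UNIV. p a * (\<Sum>i\<in>UNIV. \<Sum>j\<in>UNIV. G i j * s i * D a j))"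
proof -
  have "(\<Sum>i\<in>UNIV. \<Sum>j\<in>UNIV. G i j * s i * (\<Sum>a\<in>UNIV. p a * D a j))
     = (\<Sum>i\<in>UNIV. \<Sum>j\<in>UNIV. \<Sum>a\<in>UNIV. p a * (G i j * s i * D a j))"
    by (simp add: sum_distrib_left sum_distrib_right mult_ac)
  also have "\<dots> = (\<Sum>i\<in>UNIV. \<Sum>a\<in>UNIV. \<Sum>j\<in>UNIV. p a * (G i j * s i * D a j))"
    by (rule sum.cong[OF refl], rule sum.swap)
  also have "\<dots> = (\<Sum>a\<in>UNIV. \<Sum>i\<in>UNIV. \<Sum>j\<in>UNIV. p a * (G i j * s i * D a j))"
    by (rule sum.swap)
  also have "\<dots> = (\<Sum>a\<in>UNIV. p a * (\<Sum>i\<in>UNIV. \<Sum>j\<in>UNIV. G i j * s i * D a j))"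
    by (simp add: sum_distrib_left)
  finally show ?thesis .
qed

lemma metric_sym:
  "riemannian_metric U g \<Longrightarrow> x \<in> U \<Longrightarrow> g x $ i $ j = g x $ j $ i"
  unfolding riemannian_metric_def by blast

lemma pd_metric_sym:
  assumes "open U" "riemannian_metric U g" "x \<in> U"
  shows "pd a (\<lambda>y. g y $ i $ j) x = pd a (\<lambda>y. g y $ j $ i) x"
  by (rule pd_local[OF assms(1,3)]) (rule metric_sym[OF assms(2)])

lemma christoffel_sym:
  assumes "open U" "riemannian_metric U g" "x \<in> U"
  shows "christoffel g k i j x = christoffel g k j i x"
proof -
  have "pd l (\<lambda>y. g y $ i $ j) x = pd l (\<lambda>y. g y $ j $ i) x" for l by (rule pd_metric_sym[OF assms])
  then show ?thesis unfolding christoffel_def by (simp only: add.commute)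
qed

lemma Gamma_lower:
  assumes "riemannian_metric U g" "x \<in> U"
  shows "(\<Sum>m\<in>UNIV. g x $ l $ m * christoffel g m a b x)
     = (1/2) * (pd a (\<lambda>y. g y $ b $ l) x + pd b (\<lambda>y. g y $ a $ l) x - pd l (\<lambda>y. g y $ a $ b) x)"
proof -
  define T where "T q = pd a (\<lambda>y. g y $ b $ q) x + pd b (\<lambda>y. g y $ a $ q) x - pd q (\<lambda>y. g y $ a $ b) x" for q
  have GG: "(\<Sum>m\<in>UNIV. g x $ l $ m * matrix_inv (g x) $ m $ q) = (if l = q then 1 else 0)" for q
  proof -
    have "(g x ** matrix_inv (g x)) $ l $ q = (mat 1 :: real^'a^'a) $ l $ q"
      using matrix_inv_works(1)[OF metric_invertible[OF assms]] by simp
    then show ?thesis by (simp add: matrix_matrix_mult_def mat_def)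
  qed
  have C: "christoffel g m a b x = (\<Sum>q\<in>UNIV. (1/2) * T q * matrix_inv (g x) $ m $ q)" for m
    unfolding christoffel_def T_def sum_distrib_left by (rule sum.cong) auto
  have "(\<Sum>m\<in>UNIV. g x $ l $ m * christoffel g m a b x)
      = (\<Sum>m\<in>UNIV. \<Sum>q\<in>UNIV. (1/2) * T q * (g x $ l $ m * matrix_inv (g x) $ m $ q))"
    unfolding C sum_distrib_left by (rule sum.cong[OF refl], rule sum.cong) auto
  also have "\<dots> = (\<Sum>q\<in>UNIV. \<Sum>m\<in>UNIV. (1/2) * T q * (g x $ l $ m * matrix_inv (g x) $ m $ q))"
    by (rule sum.swap)
  also have "\<dots> = (\<Sum>q\<in>UNIV. (1/2) * T q * (if l = q then 1 else 0))"
    unfolding sum_distrib_left[symmetric] GG ..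
  also have "\<dots> = (1/2) * T l"
    by (simp add: if_distrib cong: if_cong)
  finally show ?thesis unfolding T_def .
qed

lemma pd_gval:
  assumes dg: "\<And>i j. (\<lambda>y. g y $ i $ j) differentiable (at x)"
    and dY: "\<And>i. (\<lambda>y. Y y $ i) differentiable (at x)"
    and dZ: "\<And>j. (\<lambda>y. Z y $ j) differentiable (at x)"
  shows "pd a (\<lambda>y. gval g y (Y y) (Z y)) x = (\<Sum>i\<in>UNIV. \<Sum>j\<in>UNIV.
      pd a (\<lambda>y. g y $ i $ j) x * Y x $ i * Z x $ j + g x $ i $ j * pd a (\<lambda>y. Y y $ i) x * Z x $ j
      + g x $ i $ j * Y x $ i * pd a (\<lambda>y. Z y $ j) x)"
proof -
  have d1: "(\<lambda>y. g y $ i $ j * Y y $ i) differentiable (at x)" for i j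
    using dg dY by (rule differentiable_mult)
  have d2: "(\<lambda>y. g y $ i $ j * Y y $ i * Z y $ j) differentiable (at x)" for i j
    using d1 dZ by (rule differentiable_mult)
  have d3: "(\<lambda>y. \<Sum>j\<in>UNIV. g y $ i $ j * Y y $ i * Z y $ j) differentiable (at x)" for i
    using d2 by (intro differentiable_sum) auto
  have "pd a (\<lambda>y. gval g y (Y y) (Z y)) x = (\<Sum>i\<in>UNIV. pd a (\<lambda>y. \<Sum>j\<in>UNIV. g y $ i $ j * Y y $ i * Z y $ j) x)"
    unfolding gval_def using d3 by (intro pd_sum) auto
  also have "\<dots> = (\<Sum>i\<in>UNIV. \<Sum>j\<in>UNIV. pd a (\<lambda>y. g y $ i $ j * Y y $ i * Z y $ j) x)"
    using d2 by (intro sum.cong refl pd_sum) auto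
  also have "\<dots> = (\<Sum>i\<in>UNIV. \<Sum>j\<in>UNIV.
      pd a (\<lambda>y. g y $ i $ j) x * Y x $ i * Z x $ j + g x $ i $ j * pd a (\<lambda>y. Y y $ i) x * Z x $ j
      + g x $ i $ j * Y x $ i * pd a (\<lambda>y. Z y $ j) x)"
  proof (intro sum.cong refl)
    fix i j
    have "pd a (\<lambda>y. g y $ i $ j * Y y $ i * Z y $ j) x
        = pd a (\<lambda>y. g y $ i $ j * Y y $ i) x * Z x $ j + g x $ i $ j * Y x $ i * pd a (\<lambda>y. Z y $ j) x"
      using pd_mult[OF d1 dZ] by simp
    also have "pd a (\<lambda>y. g y $ i $ j * Y y $ i) x = pd a (\<lambda>y. g y $ i $ j) x * Y x $ i + g x $ i $ j * pd a (\<lambda>y. Y y $ i) x"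
      using pd_mult[OF dg dY] by simp
    finally show "pd a (\<lambda>y. g y $ i $ j * Y y $ i * Z y $ j) x =
      pd a (\<lambda>y. g y $ i $ j) x * Y x $ i * Z x $ j + g x $ i $ j * pd a (\<lambda>y. Y y $ i) x * Z x $ j
      + g x $ i $ j * Y x $ i * pd a (\<lambda>y. Z y $ j) x"
      by (simp add: algebra_simps)
  qed
  finally show ?thesis .
qed

lemma nabla_comp:
  "nabla g X Y x $ k = (\<Sum>a\<in>UNIV. X x $ a * pd a (\<lambda>y. Y y $ k) x)
     + (\<Sum>a\<in>UNIV. \<Sum>b\<in>UNIV. christoffel g k a b x * X x $ a * Y x $ b)"
  unfolding nabla_def dder_def by simp

lemma gval_add_left: "gval g x (u + v) w = gval g x u w + gval g x v w"
  unfolding gval_def by (simp add: algebra_simps sum.distrib)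

lemma gval_add_right: "gval g x w (u + v) = gval g x w u + gval g x w v"
  unfolding gval_def by (simp add: algebra_simps sum.distrib)

lemma gval_diff_left: "gval g x (u - v) w = gval g x u w - gval g x v w"
  unfolding gval_def by (simp add: algebra_simps sum_subtractf)

lemma gval_diff_right: "gval g x w (u - v) = gval g x w u - gval g x w v"
  unfolding gval_def by (simp add: algebra_simps sum_subtractf)

lemma gval_scale_left: "gval g x (c *\<^sub>R u) w = c * gval g x u w"
  unfolding gval_def by (simp add: algebra_simps sum_distrib_left)

lemma gval_scale_right: "gval g x w (c *\<^sub>R u) = c * gval g x w u"
  unfolding gval_def by (simp add: algebra_simps sum_distrib_left)

lemma gval_sym:
  assumes "riemannian_metric U g" "x \<in> U"
  shows "gval g x u v = gval g x v u"
proof -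
  have "gval g x u v = (\<Sum>j\<in>UNIV. \<Sum>i\<in>UNIV. g x $ i $ j * u $ i * v $ j)"
    unfolding gval_def by (rule sum.swap)
  also have "\<dots> = gval g x v u"
    unfolding gval_def using metric_sym[OF assms] by (intro sum.cong refl) (simp add: mult_ac)
  finally show ?thesis .
qed

lemma metric_compat:
  assumes U: "open U" and rg: "riemannian_metric U g" and x: "x \<in> U"
    and dY: "\<And>i. (\<lambda>y. Y y $ i) differentiable (at x)"
    and dZ: "\<And>j. (\<lambda>y. Z y $ j) differentiable (at x)"
  shows "dder X (\<lambda>y. gval g y (Y y) (Z y)) x = gval g x (nabla g X Y x) (Z x) + gval g x (Y x) (nabla g X Z x)"
proof -
  define G where "G i j = g x $ i $ j" for i j
  define p where "p a = X x $ a" for a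
  define DY where "DY a i = pd a (\<lambda>y. Y y $ i) x" for a i
  define DZ where "DZ a j = pd a (\<lambda>y. Z y $ j) x" for a j
  define dG where "dG a i j = pd a (\<lambda>y. g y $ i $ j) x" for a i j
  define \<Gamma> where "\<Gamma> k a b = christoffel g k a b x" for k a b
  have dg: "(\<lambda>y. g y $ i $ j) differentiable (at x)" for i j
    using smooth_at[OF U metric_smooth[OF rg] x] .
  have L: "(\<Sum>m\<in>UNIV. G l m * \<Gamma> m a b) = (1/2) * (dG a b l + dG b a l - dG l a b)" for l a b
    unfolding G_def \<Gamma>_def dG_def by (rule Gamma_lower[OF rg x])
  have Gs: "G i j = G j i" for i j unfolding G_def by (rule metric_sym[OF rg x])
  have dGs: "dG a i j = dG a j i" for a i j unfolding dG_def by (rule pd_metric_sym[OF U rg x])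
  have lhs: "dder X (\<lambda>y. gval g y (Y y) (Z y)) x
     = (\<Sum>a\<in>UNIV. p a * (\<Sum>i\<in>UNIV. \<Sum>j\<in>UNIV. dG a i j * Y x $ i * Z x $ j))
     + (\<Sum>a\<in>UNIV. p a * (\<Sum>i\<in>UNIV. \<Sum>j\<in>UNIV. G i j * DY a i * Z x $ j))
     + (\<Sum>a\<in>UNIV. p a * (\<Sum>i\<in>UNIV. \<Sum>j\<in>UNIV. G i j * Y x $ i * DZ a j))"
    unfolding dder_def pd_gval[OF dg dY dZ] p_def[symmetric] G_def[symmetric] dG_def[symmetric]
      DY_def[symmetric] DZ_def[symmetric]
    by (simp add: sum.distrib distrib_left)
  have r1: "gval g x (nabla g X Y x) (Z x)
     = (\<Sum>a\<in>UNIV. p a * (\<Sum>i\<in>UNIV. \<Sum>j\<in>UNIV. G i j * DY a i * Z x $ j))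
     + (\<Sum>a\<in>UNIV. \<Sum>b\<in>UNIV. \<Sum>j\<in>UNIV. p a * Y x $ b * Z x $ j * (\<Sum>i\<in>UNIV. G i j * \<Gamma> i a b))"
  proof -
    have "gval g x (nabla g X Y x) (Z x)
      = (\<Sum>i\<in>UNIV. \<Sum>j\<in>UNIV. G i j * (\<Sum>a\<in>UNIV. p a * DY a i) * Z x $ j)
      + (\<Sum>i\<in>UNIV. \<Sum>j\<in>UNIV. G i j * (\<Sum>a\<in>UNIV. \<Sum>b\<in>UNIV. \<Gamma> i a b * p a * Y x $ b) * Z x $ j)"
      unfolding gval_def nabla_comp p_def[symmetric] G_def[symmetric] DY_def[symmetric] \<Gamma>_def[symmetric]
      by (simp add: sum.distrib distrib_left distrib_right)
    then show ?thesis unfolding P1_form Q1_form .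
  qed
  have r2: "gval g x (Y x) (nabla g X Z x)
     = (\<Sum>a\<in>UNIV. p a * (\<Sum>i\<in>UNIV. \<Sum>j\<in>UNIV. G i j * Y x $ i * DZ a j))
     + (\<Sum>a\<in>UNIV. \<Sum>i\<in>UNIV. \<Sum>b\<in>UNIV. p a * Y x $ i * Z x $ b * (\<Sum>j\<in>UNIV. G i j * \<Gamma> j a b))"
  proof -
    have "gval g x (Y x) (nabla g X Z x)
      = (\<Sum>i\<in>UNIV. \<Sum>j\<in>UNIV. G i j * Y x $ i * (\<Sum>a\<in>UNIV. p a * DZ a j))
      + (\<Sum>i\<in>UNIV. \<Sum>j\<in>UNIV. G i j * Y x $ i * (\<Sum>a\<in>UNIV. \<Sum>b\<in>UNIV. \<Gamma> j a b * p a * Z x $ b))"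
      unfolding gval_def nabla_comp p_def[symmetric] G_def[symmetric] DZ_def[symmetric] \<Gamma>_def[symmetric]
      by (simp add: sum.distrib distrib_left distrib_right)
    then show ?thesis unfolding P2_form Q2_form .
  qed
  have key: "(\<Sum>a\<in>UNIV. p a * (\<Sum>i\<in>UNIV. \<Sum>j\<in>UNIV. dG a i j * Y x $ i * Z x $ j))
     = (\<Sum>a\<in>UNIV. \<Sum>b\<in>UNIV. \<Sum>j\<in>UNIV. p a * Y x $ b * Z x $ j * (\<Sum>i\<in>UNIV. G i j * \<Gamma> i a b))
     + (\<Sum>a\<in>UNIV. \<Sum>i\<in>UNIV. \<Sum>b\<in>UNIV. p a * Y x $ i * Z x $ b * (\<Sum>j\<in>UNIV. G i j * \<Gamma> j a b))"
  proof -
    have e1: "(\<Sum>i\<in>UNIV. G i j * \<Gamma> i a b) = (1/2) * (dG a b j + dG b a j - dG j a b)" for j a b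
      using L[of j a b] Gs by (simp add: Gs[of j])
    have e2: "(\<Sum>j\<in>UNIV. G i j * \<Gamma> j a b) = (1/2) * (dG a b i + dG b a i - dG i a b)" for i a b
      using L[of i a b] .
    have "(\<Sum>a\<in>UNIV. \<Sum>b\<in>UNIV. \<Sum>j\<in>UNIV. p a * Y x $ b * Z x $ j * (\<Sum>i\<in>UNIV. G i j * \<Gamma> i a b))
     + (\<Sum>a\<in>UNIV. \<Sum>i\<in>UNIV. \<Sum>b\<in>UNIV. p a * Y x $ i * Z x $ b * (\<Sum>j\<in>UNIV. G i j * \<Gamma> j a b))
     = (\<Sum>a\<in>UNIV. \<Sum>b\<in>UNIV. \<Sum>j\<in>UNIV. p a * Y x $ b * Z x $ j * ((1/2) * (dG a b j + dG b a j - dG j a b)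
         + (1/2) * (dG a j b + dG j a b - dG b a j)))"
      unfolding e1 e2 by (simp add: sum.distrib distrib_left)
    also have "\<dots> = (\<Sum>a\<in>UNIV. \<Sum>b\<in>UNIV. \<Sum>j\<in>UNIV. p a * Y x $ b * Z x $ j * dG a b j)"
      using dGs by (intro sum.cong refl) (simp add: algebra_simps dGs[of _ j])
    also have "\<dots> = (\<Sum>a\<in>UNIV. p a * (\<Sum>i\<in>UNIV. \<Sum>j\<in>UNIV. dG a i j * Y x $ i * Z x $ j))"
      by (simp add: sum_distrib_left mult_ac)
    finally show ?thesis by simp
  qed
  show ?thesis unfolding lhs r1 r2 key by simp
qed

lemma torsion:
  assumes "open U" "riemannian_metric U g" "x \<in> U"
  shows "nabla g X Y x - nabla g Y X x = lie X Y x"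
proof -
  have "(\<Sum>a\<in>UNIV. \<Sum>b\<in>UNIV. christoffel g k a b x * Y x $ a * X x $ b)
      = (\<Sum>a\<in>UNIV. \<Sum>b\<in>UNIV. christoffel g k a b x * X x $ a * Y x $ b)" for k
  proof -
    have "(\<Sum>a\<in>UNIV. \<Sum>b\<in>UNIV. christoffel g k a b x * Y x $ a * X x $ b)
      = (\<Sum>b\<in>UNIV. \<Sum>a\<in>UNIV. christoffel g k a b x * Y x $ a * X x $ b)" by (rule sum.swap)
    also have "\<dots> = (\<Sum>a\<in>UNIV. \<Sum>b\<in>UNIV. christoffel g k a b x * X x $ a * Y x $ b)"
      using christoffel_sym[OF assms] by (intro sum.cong refl) (simp add: mult_ac christoffel_sym[OF assms, of k _ b] )
    finally show ?thesis .
  qed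
  then show ?thesis unfolding nabla_def lie_def by (simp add: vec_eq_iff)
qed

lemma nabla_ptX: "nabla g X Y x = nabla g (\<lambda>_. X x) Y x"
  unfolding nabla_def dder_def by simp

lemma dder_local:
  assumes "open U" "x \<in> U" "\<And>y. y \<in> U \<Longrightarrow> f y = h y"
  shows "dder X f x = dder X h x"
  unfolding dder_def using pd_local[OF assms] by simp

lemma nabla_localY:
  assumes "open U" "x \<in> U" "\<And>y. y \<in> U \<Longrightarrow> Y y = Y' y"
  shows "nabla g X Y x = nabla g X Y' x"
proof -
  have "dder X (\<lambda>y. Y y $ k) x = dder X (\<lambda>y. Y' y $ k) x" for k
    using assms by (intro dder_local) auto
  then show ?thesis unfolding nabla_def using assms(2,3) by simp
qed

lemma ken_rg: "kenmotsu U phi xi eta g \<Longrightarrow> riemannian_metric U g"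
  unfolding kenmotsu_def almost_contact_metric_def by blast

lemma ken_xi_smooth: "kenmotsu U phi xi eta g \<Longrightarrow> smooth_vf U xi"
  unfolding kenmotsu_def almost_contact_metric_def by blast

lemma ken_eta_smooth: "kenmotsu U phi xi eta g \<Longrightarrow> smooth_vf U eta"
  unfolding kenmotsu_def almost_contact_metric_def by blast

lemma ken_eta_xi: "kenmotsu U phi xi eta g \<Longrightarrow> x \<in> U \<Longrightarrow> eta x \<bullet> xi x = 1"
  unfolding kenmotsu_def almost_contact_metric_def by blast

lemma ken_g_xi: "kenmotsu U phi xi eta g \<Longrightarrow> x \<in> U \<Longrightarrow> gval g x u (xi x) = eta x \<bullet> u"
  unfolding kenmotsu_def almost_contact_metric_def by blast

lemma ken_nabla_xi:
  assumes "kenmotsu U phi xi eta g" "x \<in> U"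
  shows "nabla g Y xi x = Y x - (eta x \<bullet> Y x) *\<^sub>R xi x"
proof -
  have "nabla g (\<lambda>_. Y x) xi x = (\<lambda>_. Y x) x - (eta x \<bullet> (\<lambda>_. Y x) x) *\<^sub>R xi x"
    using assms const_vf[of U "Y x"] unfolding kenmotsu_def by blast
  then show ?thesis using nabla_ptX[of g Y xi x] by simp
qed

lemma vf_diff: "open U \<Longrightarrow> smooth_vf U Y \<Longrightarrow> x \<in> U \<Longrightarrow> (\<lambda>y. Y y $ i) differentiable (at x)"
  using smooth_at vf_smooth by blast

lemma dder_eta:
  assumes U: "open U" and K: "kenmotsu U phi xi eta g" and x: "x \<in> U"
    and dY: "\<And>i. (\<lambda>y. Y y $ i) differentiable (at x)"
  shows "dder X (\<lambda>y. eta y \<bullet> Y y) x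
     = eta x \<bullet> nabla g X Y x + gval g x (X x) (Y x) - (eta x \<bullet> X x) * (eta x \<bullet> Y x)"
proof -
  note rg = ken_rg[OF K]
  have "dder X (\<lambda>y. eta y \<bullet> Y y) x = dder X (\<lambda>y. gval g y (Y y) (xi y)) x"
    using ken_g_xi[OF K] by (intro dder_local[OF U x]) simp
  also have "\<dots> = gval g x (nabla g X Y x) (xi x) + gval g x (Y x) (nabla g X xi x)"
    by (rule metric_compat[OF U rg x dY vf_diff[OF U ken_xi_smooth[OF K] x]])
  also have "\<dots> = eta x \<bullet> nabla g X Y x + gval g x (X x) (Y x) - (eta x \<bullet> X x) * (eta x \<bullet> Y x)"
    unfolding ken_nabla_xi[OF K x] gval_diff_right gval_scale_right ken_g_xi[OF K x]
    using gval_sym[OF rg x, of "Y x" "X x"] by simp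
  finally show ?thesis .
qed

lemma lie_g_formula:
  assumes U: "open U" and K: "kenmotsu U phi xi eta g" and x: "x \<in> U"
    and dY: "\<And>i. (\<lambda>y. Y y $ i) differentiable (at x)"
    and dZ: "\<And>i. (\<lambda>y. Z y $ i) differentiable (at x)"
  shows "lie_g g xi Y Z x = 2 * gval g x (Y x) (Z x) - 2 * (eta x \<bullet> Y x) * (eta x \<bullet> Z x)"
proof -
  note rg = ken_rg[OF K]
  have t1: "lie xi Y x = nabla g xi Y x - nabla g Y xi x" using torsion[OF U rg x] by simp
  have t2: "lie xi Z x = nabla g xi Z x - nabla g Z xi x" using torsion[OF U rg x] by simp
  have s: "gval g x (xi x) (Z x) = eta x \<bullet> Z x"
    using gval_sym[OF rg x] ken_g_xi[OF K x] by metis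
  show ?thesis
    unfolding lie_g_def metric_compat[OF U rg x dY dZ] t1 t2 gval_diff_left gval_diff_right
      ken_nabla_xi[OF K x] gval_scale_left gval_scale_right s ken_g_xi[OF K x]
    by simp
qed

lemma dder_add: "f differentiable (at x) \<Longrightarrow> h differentiable (at x) \<Longrightarrow>
    dder X (\<lambda>y. f y + h y) x = dder X f x + dder X h x"
  unfolding dder_def by (simp add: pd_add distrib_left sum.distrib)

lemma dder_diff: "f differentiable (at x) \<Longrightarrow> h differentiable (at x) \<Longrightarrow>
    dder X (\<lambda>y. f y - h y) x = dder X f x - dder X h x"
  unfolding dder_def by (simp add: pd_diff right_diff_distrib sum_subtractf)

lemma dder_mult: "f differentiable (at x) \<Longrightarrow> h differentiable (at x) \<Longrightarrow>
    dder X (\<lambda>y. f y * h y) x = dder X f x * h x + f x * dder X h x"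
  unfolding dder_def by (simp add: pd_mult distrib_left sum.distrib sum_distrib_right sum_distrib_left mult_ac)

lemma dder_cmult: "f differentiable (at x) \<Longrightarrow> dder X (\<lambda>y. c * f y) x = c * dder X f x"
  unfolding dder_def by (simp add: pd_cmult sum_distrib_left mult_ac)

lemma dder_const[simp]: "dder X (\<lambda>y. c) x = 0"
  unfolding dder_def by simp

lemma dder_sum: "finite I \<Longrightarrow> (\<And>i. i \<in> I \<Longrightarrow> f i differentiable (at x)) \<Longrightarrow>
    dder X (\<lambda>y. \<Sum>i\<in>I. f i y) x = (\<Sum>i\<in>I. dder X (f i) x)"
  unfolding dder_def by (simp add: pd_sum sum_distrib_left) (rule sum.swap)

lemma sum_axis: "(\<Sum>i\<in>UNIV. axis k (1::real) $ i * f i) = f k"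
proof -
  have "(\<Sum>i\<in>UNIV. axis k (1::real) $ i * f i) = (\<Sum>i\<in>UNIV. if i = k then f i else 0)"
    by (intro sum.cong refl) (simp add: axis_def)
  then show ?thesis by simp
qed

lemma dder_E: "dder (E k) f x = pd k f x"
  unfolding dder_def E_def by (simp add: sum_axis)

lemma inner_axis1: "v \<bullet> axis k (1::real) = v $ k"
  by (simp add: inner_axis)



lemma nabla_zero: "nabla g X (\<lambda>_. 0) x = 0"
  unfolding nabla_def dder_def by (simp add: vec_eq_iff)

lemma ricci_xi_xi:
  fixes xi eta :: "real^'n::finite \<Rightarrow> real^'n"
  assumes U: "open U" and K: "kenmotsu U phi xi eta g" and x: "x \<in> U"
  shows "ricci g xi xi x = 1 - real CARD('n)"
proof -
  note rg = ken_rg[OF K]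
  note xs = ken_xi_smooth[OF K] and es = ken_eta_smooth[OF K]
  define \<Gamma> where "\<Gamma> m a b = christoffel g m a b x" for m a b
  have dxi: "(\<lambda>y. xi y $ i) differentiable (at x)" for i using vf_diff[OF U xs x] .
  have deta: "(\<lambda>y. eta y $ i) differentiable (at x)" for i using vf_diff[OF U es x] .
  have Gs: "\<Gamma> m a b = \<Gamma> m b a" for m a b unfolding \<Gamma>_def by (rule christoffel_sym[OF U rg x])
  have nxx: "nabla g xi xi y = 0" if "y \<in> U" for y
    using ken_nabla_xi[OF K that] ken_eta_xi[OF K that] by simp
  have T1: "nabla g (E k) (nabla g xi xi) x = 0" for k
    using nabla_localY[OF U x, of "nabla g xi xi" "\<lambda>_. 0" g "E k"] nxx nabla_zero by simp
  have nxx_comp: "dder xi (\<lambda>y. xi y $ m) x + (\<Sum>a\<in>UNIV. \<Sum>b\<in>UNIV. \<Gamma> m a b * xi x $ a * xi x $ b) = 0" for m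
    using nxx[OF x] unfolding nabla_def \<Gamma>_def by (simp add: vec_eq_iff)
  have Nk: "pd k (\<lambda>y. xi y $ m) x + (\<Sum>b\<in>UNIV. \<Gamma> m k b * xi x $ b) = axis k 1 $ m - eta x $ k * xi x $ m" for k m
  proof -
    have "nabla g (E k) xi x $ m = axis k 1 $ m - eta x $ k * xi x $ m"
      using ken_nabla_xi[OF K x, of "E k"] unfolding E_def by (simp add: inner_axis1)
    moreover have "nabla g (E k) xi x $ m = pd k (\<lambda>y. xi y $ m) x + (\<Sum>b\<in>UNIV. \<Gamma> m k b * xi x $ b)"
    proof -
      have "(\<Sum>a\<in>UNIV. \<Sum>b\<in>UNIV. christoffel g m a b x * axis k 1 $ a * xi x $ b)
          = (\<Sum>a\<in>UNIV. axis k 1 $ a * (\<Sum>b\<in>UNIV. christoffel g m a b x * xi x $ b))"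
        by (simp add: sum_distrib_left mult_ac)
      then show ?thesis unfolding nabla_comp \<Gamma>_def E_def by (simp add: sum_axis)
    qed
    ultimately show ?thesis by simp
  qed
  have T2: "nabla g xi (nabla g (E k) xi) x $ m = - dder xi (\<lambda>y. eta y $ k) x * xi x $ m + (\<Sum>a\<in>UNIV. \<Gamma> m a k * xi x $ a)" for k m
  proof -
    define F where "F y = axis k 1 - (eta y $ k) *\<^sub>R xi y" for y
    have "nabla g (E k) xi y = F y" if "y \<in> U" for y
      using ken_nabla_xi[OF K that, of "E k"] unfolding E_def F_def by (simp add: inner_axis1)
    then have "nabla g xi (nabla g (E k) xi) x = nabla g xi F x"
      by (intro nabla_localY[OF U x]) auto
    also have "\<dots> $ m = dder xi (\<lambda>y. axis k 1 $ m - eta y $ k * xi y $ m) x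
        + (\<Sum>a\<in>UNIV. \<Sum>b\<in>UNIV. \<Gamma> m a b * xi x $ a * (axis k 1 $ b - eta x $ k * xi x $ b))"
      unfolding nabla_def F_def \<Gamma>_def by simp
    also have "dder xi (\<lambda>y. axis k 1 $ m - eta y $ k * xi y $ m) x
        = - (dder xi (\<lambda>y. eta y $ k) x * xi x $ m + eta x $ k * dder xi (\<lambda>y. xi y $ m) x)"
      using dder_diff[OF differentiable_const[of "axis k 1 $ m"] differentiable_mult[OF deta dxi], where X=xi]
        dder_mult[OF deta dxi, where X=xi] by simp
    also have "(\<Sum>a\<in>UNIV. \<Sum>b\<in>UNIV. \<Gamma> m a b * xi x $ a * (axis k 1 $ b - eta x $ k * xi x $ b))
        = (\<Sum>a\<in>UNIV. \<Gamma> m a k * xi x $ a) - eta x $ k * (\<Sum>a\<in>UNIV. \<Sum>b\<in>UNIV. \<Gamma> m a b * xi x $ a * xi x $ b)"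
    proof -
      have "(\<Sum>a\<in>UNIV. \<Sum>b\<in>UNIV. \<Gamma> m a b * xi x $ a * (axis k 1 $ b - eta x $ k * xi x $ b))
        = (\<Sum>a\<in>UNIV. (\<Sum>b\<in>UNIV. axis k 1 $ b * (\<Gamma> m a b * xi x $ a)) - eta x $ k * (\<Sum>b\<in>UNIV. \<Gamma> m a b * xi x $ a * xi x $ b))"
        by (intro sum.cong refl) (simp add: algebra_simps sum_subtractf sum_distrib_left)
      also have "\<dots> = (\<Sum>a\<in>UNIV. \<Gamma> m a k * xi x $ a - eta x $ k * (\<Sum>b\<in>UNIV. \<Gamma> m a b * xi x $ a * xi x $ b))"
        by (simp only: sum_axis)
      finally show ?thesis by (simp add: sum_subtractf sum_distrib_left)
    qed
    finally have X: "nabla g xi (nabla g (E k) xi) x $ m = - (dder xi (\<lambda>y. eta y $ k) x * xi x $ m + eta x $ k * dder xi (\<lambda>y. xi y $ m) x) +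
      ((\<Sum>a\<in>UNIV. \<Gamma> m a k * xi x $ a) - eta x $ k * (\<Sum>a\<in>UNIV. \<Sum>b\<in>UNIV. \<Gamma> m a b * xi x $ a * xi x $ b))" .
    have Dsub: "dder xi (\<lambda>y. xi y $ m) x = - (\<Sum>a\<in>UNIV. \<Sum>b\<in>UNIV. \<Gamma> m a b * xi x $ a * xi x $ b)"
      using nxx_comp[of m] by linarith
    show ?thesis unfolding X Dsub by (simp add: algebra_simps)
  qed
  define V where "V k = (\<chi> m. pd k (\<lambda>y. xi y $ m) x)" for k
  have T3: "nabla g (lie (E k) xi) xi x = V k - (eta x \<bullet> V k) *\<^sub>R xi x" for k
  proof -
    have "lie (E k) xi x = V k"
      unfolding lie_def V_def dder_E by (simp add: E_def)
    then show ?thesis using ken_nabla_xi[OF K x, of "lie (E k) xi"] by simp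
  qed
  have curvk: "curv g (E k) xi xi x $ k = dder xi (\<lambda>y. eta y $ k) x * xi x $ k - (\<Sum>a\<in>UNIV. \<Gamma> k a k * xi x $ a)
      - pd k (\<lambda>y. xi y $ k) x + (\<Sum>j\<in>UNIV. eta x $ j * pd k (\<lambda>y. xi y $ j) x) * xi x $ k" for k
    unfolding curv_def using T1 T2[of k k] T3[of k] by (simp add: V_def inner_vec_def)
  define S1 where "S1 = (\<Sum>k\<in>UNIV. dder xi (\<lambda>y. eta y $ k) x * xi x $ k)"
  define S2 where "S2 = (\<Sum>k\<in>UNIV. \<Sum>a\<in>UNIV. \<Gamma> k a k * xi x $ a)"
  define S3 where "S3 = (\<Sum>k\<in>UNIV. pd k (\<lambda>y. xi y $ k) x)"
  define S4 where "S4 = (\<Sum>k\<in>UNIV. (\<Sum>j\<in>UNIV. eta x $ j * pd k (\<lambda>y. xi y $ j) x) * xi x $ k)"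
  have ric: "ricci g xi xi x = S1 - S2 - S3 + S4"
    unfolding ricci_def curvk S1_def S2_def S3_def S4_def by (simp add: sum.distrib sum_subtractf)
  have ex: "(\<Sum>k\<in>UNIV. eta x $ k * xi x $ k) = 1"
    using ken_eta_xi[OF K x] by (simp add: inner_vec_def)
  have s3: "S3 = real CARD('n) - 1 - S2"
  proof -
    have "S3 = (\<Sum>k\<in>UNIV. axis k 1 $ k - eta x $ k * xi x $ k - (\<Sum>b\<in>UNIV. \<Gamma> k k b * xi x $ b))"
      unfolding S3_def using Nk by (intro sum.cong refl) (simp add: algebra_simps)
    also have "\<dots> = real CARD('n) - 1 - S2"
      unfolding S2_def using ex Gs by (simp add: sum_subtractf axis_def Gs[of _ _ k for k] )
    finally show ?thesis .
  qed
  have s14: "S1 + S4 = 0"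
  proof -
    have "dder xi (\<lambda>y. eta y \<bullet> xi y) x = dder xi (\<lambda>y. 1) x"
      using ken_eta_xi[OF K] by (intro dder_local[OF U x]) simp
    then have z: "dder xi (\<lambda>y. eta y \<bullet> xi y) x = 0" by simp
    have "dder xi (\<lambda>y. eta y \<bullet> xi y) x = dder xi (\<lambda>y. \<Sum>j\<in>UNIV. eta y $ j * xi y $ j) x"
      by (simp add: inner_vec_def)
    also have "\<dots> = (\<Sum>j\<in>UNIV. dder xi (\<lambda>y. eta y $ j * xi y $ j) x)"
      using differentiable_mult[OF deta dxi] by (intro dder_sum) auto
    also have "\<dots> = (\<Sum>j\<in>UNIV. dder xi (\<lambda>y. eta y $ j) x * xi x $ j + eta x $ j * dder xi (\<lambda>y. xi y $ j) x)"
      using dder_mult[OF deta dxi] by simp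
    also have "\<dots> = S1 + (\<Sum>j\<in>UNIV. eta x $ j * dder xi (\<lambda>y. xi y $ j) x)"
      unfolding S1_def by (simp add: sum.distrib)
    also have "(\<Sum>j\<in>UNIV. eta x $ j * dder xi (\<lambda>y. xi y $ j) x) = S4"
    proof -
      have "S4 = (\<Sum>k\<in>UNIV. \<Sum>j\<in>UNIV. eta x $ j * (xi x $ k * pd k (\<lambda>y. xi y $ j) x))"
        unfolding S4_def sum_distrib_right by (intro sum.cong refl) (simp add: mult_ac)
      also have "\<dots> = (\<Sum>j\<in>UNIV. \<Sum>k\<in>UNIV. eta x $ j * (xi x $ k * pd k (\<lambda>y. xi y $ j) x))"
        by (rule sum.swap)
      finally show ?thesis unfolding dder_def by (simp add: sum_distrib_left)
    qed
    finally show ?thesis using z by simp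
  qed
  show ?thesis unfolding ric s3 using s14 by simp
qed



lemma smooth_gval:
  assumes U: "open U" and rg: "riemannian_metric U g" and Y: "smooth_vf U Y" and Z: "smooth_vf U Z"
  shows "smooth_fun U (\<lambda>y. gval g y (Y y) (Z y))"
  unfolding gval_def
  by (intro smooth_sum[OF U] smooth_mult[OF U] metric_smooth[OF rg] vf_smooth[OF Y] vf_smooth[OF Z] finite)

lemma smooth_inner:
  assumes U: "open U" and Y: "smooth_vf U Y" and Z: "smooth_vf U Z"
  shows "smooth_fun U (\<lambda>y. Y y \<bullet> Z y)"
  unfolding inner_vec_def inner_real_def
  by (intro smooth_sum[OF U] smooth_mult[OF U] vf_smooth[OF Y] vf_smooth[OF Z] finite) 

lemma soliton_c:
  fixes xi eta :: "real^'n::finite \<Rightarrow> real^'n"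
  assumes U: "open U" and K: "kenmotsu U phi xi eta g" and x: "x \<in> U"
    and S: "conformal_eta_einstein_soliton U n xi eta g lam mu p"
    and N: "CARD('n) = 2 * n + 1"
  shows "2 * lam - scal g x + (p x + 2 / (2 * real n + 1)) = 4 * real n - 2 * mu"
proof -
  note xs = ken_xi_smooth[OF K]
  have "lie_g g xi xi xi x + 2 * ricci g xi xi x
        + (2 * lam - scal g x + (p x + 2 / (2 * real n + 1))) * gval g x (xi x) (xi x)
        + 2 * mu * (eta x \<bullet> xi x) * (eta x \<bullet> xi x) = 0"
    using S xs x unfolding conformal_eta_einstein_soliton_def by blast
  moreover have "gval g x (xi x) (xi x) = 1" using ken_g_xi[OF K x] ken_eta_xi[OF K x] by simp
  moreover have "lie_g g xi xi xi x = 0"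
    using lie_g_formula[OF U K x vf_diff[OF U xs x] vf_diff[OF U xs x]] ken_g_xi[OF K x] ken_eta_xi[OF K x] by simp
  moreover have "ricci g xi xi x = - 2 * real n"
    using ricci_xi_xi[OF U K x] N by simp
  ultimately show ?thesis using ken_eta_xi[OF K x] by simp
qed

lemma ricci_formula:
  fixes xi eta :: "real^'n::finite \<Rightarrow> real^'n"
  assumes U: "open U" and K: "kenmotsu U phi xi eta g" and x: "x \<in> U"
    and S: "conformal_eta_einstein_soliton U n xi eta g lam mu p"
    and N: "CARD('n) = 2 * n + 1"
    and Y: "smooth_vf U Y" and Z: "smooth_vf U Z"
  shows "ricci g Y Z x = - (1 + 2 * real n - mu) * gval g x (Y x) (Z x) + (1 - mu) * (eta x \<bullet> Y x) * (eta x \<bullet> Z x)"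
proof -
  have "lie_g g xi Y Z x + 2 * ricci g Y Z x
        + (2 * lam - scal g x + (p x + 2 / (2 * real n + 1))) * gval g x (Y x) (Z x)
        + 2 * mu * (eta x \<bullet> Y x) * (eta x \<bullet> Z x) = 0"
    using S Y Z x unfolding conformal_eta_einstein_soliton_def by blast
  then show ?thesis
    unfolding soliton_c[OF U K x S N] lie_g_formula[OF U K x vf_diff[OF U Y x] vf_diff[OF U Z x]]
    by (simp add: algebra_simps)
qed

lemma alg_id:
  fixes A B P Q e1 e2 gXY gXZ eX eY eZ :: real
  shows "A * (P + Q) + B * ((e1 + gXY - eX * eY) * eZ + eY * (e2 + gXZ - eX * eZ))
     - (A * P + B * e1 * eZ) - (A * Q + B * eY * e2)
     = B * ((gXY - eX * eY) * eZ + eY * (gXZ - eX * eZ))"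
  by (simp add: algebra_simps)

lemma nabla_ricci_formula:
  fixes xi eta :: "real^'n::finite \<Rightarrow> real^'n"
  assumes U: "open U" and K: "kenmotsu U phi xi eta g" and x: "x \<in> U"
    and S: "conformal_eta_einstein_soliton U n xi eta g lam mu p"
    and N: "CARD('n) = 2 * n + 1"
    and X: "smooth_vf U X" and Y: "smooth_vf U Y" and Z: "smooth_vf U Z"
  shows "nabla_ricci g X Y Z x = (1 - mu) * ((gval g x (X x) (Y x) - (eta x \<bullet> X x) * (eta x \<bullet> Y x)) * (eta x \<bullet> Z x)
     + (eta x \<bullet> Y x) * (gval g x (X x) (Z x) - (eta x \<bullet> X x) * (eta x \<bullet> Z x)))"
proof -
  note rg = ken_rg[OF K] and es = ken_eta_smooth[OF K]
  define A where "A = - (1 + 2 * real n - mu)"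
  define B where "B = 1 - mu"
  have dgv: "(\<lambda>y. gval g y (Y y) (Z y)) differentiable (at x)"
    using smooth_at[OF U smooth_gval[OF U rg Y Z] x] .
  have deY: "(\<lambda>y. eta y \<bullet> Y y) differentiable (at x)"
    using smooth_at[OF U smooth_inner[OF U es Y] x] .
  have deZ: "(\<lambda>y. eta y \<bullet> Z y) differentiable (at x)"
    using smooth_at[OF U smooth_inner[OF U es Z] x] .
  have "dder X (ricci g Y Z) x = dder X (\<lambda>y. A * gval g y (Y y) (Z y) + B * ((eta y \<bullet> Y y) * (eta y \<bullet> Z y))) x"
    using ricci_formula[OF U K _ S N Y Z] unfolding A_def B_def
    by (intro dder_local[OF U x]) (simp add: algebra_simps)
  also have "\<dots> = A * dder X (\<lambda>y. gval g y (Y y) (Z y)) x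
      + B * (dder X (\<lambda>y. eta y \<bullet> Y y) x * (eta x \<bullet> Z x) + (eta x \<bullet> Y x) * dder X (\<lambda>y. eta y \<bullet> Z y) x)"
    using dder_add[OF differentiable_mult[OF differentiable_const dgv] differentiable_mult[OF differentiable_const differentiable_mult[OF deY deZ]]]
      dder_cmult[OF dgv] dder_cmult[OF differentiable_mult[OF deY deZ]] dder_mult[OF deY deZ]
    by simp
  finally have d: "dder X (ricci g Y Z) x = A * (gval g x (nabla g X Y x) (Z x) + gval g x (Y x) (nabla g X Z x))
      + B * ((eta x \<bullet> nabla g X Y x + gval g x (X x) (Y x) - (eta x \<bullet> X x) * (eta x \<bullet> Y x)) * (eta x \<bullet> Z x)
         + (eta x \<bullet> Y x) * (eta x \<bullet> nabla g X Z x + gval g x (X x) (Z x) - (eta x \<bullet> X x) * (eta x \<bullet> Z x)))"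
    unfolding metric_compat[OF U rg x vf_diff[OF U Y x] vf_diff[OF U Z x]]
      dder_eta[OF U K x vf_diff[OF U Y x]] dder_eta[OF U K x vf_diff[OF U Z x]] .
  have r1: "ricci g (nabla g X Y) Z x = A * gval g x (nabla g X Y x) (Z x) + B * (eta x \<bullet> nabla g X Y x) * (eta x \<bullet> Z x)"
    unfolding A_def B_def by (rule ricci_formula[OF U K x S N nabla_smooth[OF U rg X Y] Z])
  have r2: "ricci g Y (nabla g X Z) x = A * gval g x (Y x) (nabla g X Z x) + B * (eta x \<bullet> Y x) * (eta x \<bullet> nabla g X Z x)"
    unfolding A_def B_def by (rule ricci_formula[OF U K x S N Y nabla_smooth[OF U rg X Z]])
  show ?thesis unfolding nabla_ricci_def d r1 r2 B_def[symmetric] by (rule alg_id)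
qed

lemma exists_perp:
  fixes v :: "real^'n::finite"
  assumes "v \<noteq> 0" "CARD('n) \<ge> 2"
  shows "\<exists>w. w \<noteq> 0 \<and> v \<bullet> w = 0"
proof -
  obtain a where a: "v $ a \<noteq> 0" using assms(1) by (metis vec_eq_iff zero_index)
  have "UNIV - {a} \<noteq> {}"
  proof
    assume "UNIV - {a} = {}"
    then have "(UNIV :: 'n set) = {a}" by auto
    then have "CARD('n) = card {a}" by (rule arg_cong[where f=card])
    then show False using assms(2) by simp
  qed
  then obtain b where b: "b \<noteq> a" by auto
  define w where "w = (v $ b) *\<^sub>R axis a (1::real) - (v $ a) *\<^sub>R axis b 1"
  have "w $ b = - v $ a" unfolding w_def using b by (simp add: axis_def)
  then have "w \<noteq> 0" using a by auto
  moreover have "v \<bullet> w = 0" unfolding w_def by (simp add: inner_diff_right inner_axis1)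
  ultimately show ?thesis by blast
qed

theorem corollary3p5:
  fixes U :: "(real^'n::finite) set"
    and n :: nat
    and phi :: "real^'n \<Rightarrow> real^'n^'n"
    and xi eta :: "real^'n \<Rightarrow> real^'n"
    and g :: "real^'n \<Rightarrow> real^'n^'n"
    and lam mu :: real
    and p :: "real^'n \<Rightarrow> real"
  assumes "n \<ge> 1" and "CARD('n) = 2 * n + 1"
    and "open U"
    and "kenmotsu U phi xi eta g"
    and "cyclic_ricci U g"
    and "conformal_eta_einstein_soliton U n xi eta g lam mu p"
  shows "\<forall>x\<in>U. scal g x = (p x + 2 / (2 * real n + 1)) - 4 * real n + 2 * lam + 2"
proof
  fix x assume x: "x \<in> U"
  note N = assms(2) and U = assms(3) and K = assms(4) and C = assms(5) and S = assms(6)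
  note rg = ken_rg[OF K] and xs = ken_xi_smooth[OF K]
  have ex1: "eta x \<bullet> xi x = 1" by (rule ken_eta_xi[OF K x])
  then have "eta x \<noteq> 0" by auto
  moreover have "CARD('n) \<ge> 2" using N assms(1) by simp
  ultimately obtain w where w0: "w \<noteq> 0" and w1: "eta x \<bullet> w = 0" using exists_perp by blast
  have Ws: "smooth_vf U (\<lambda>_. w)" by (rule const_vf)
  have cyc: "nabla_ricci g xi (\<lambda>_. w) (\<lambda>_. w) x + nabla_ricci g (\<lambda>_. w) (\<lambda>_. w) xi x
      + nabla_ricci g (\<lambda>_. w) xi (\<lambda>_. w) x = 0"
    using C xs Ws x unfolding cyclic_ricci_def by blast
  have gwx: "gval g x w (xi x) = 0" using ken_g_xi[OF K x] w1 by simp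
  have gxw: "gval g x (xi x) w = 0" using gwx gval_sym[OF rg x] by metis
  have gww: "gval g x w w > 0" using rg x w0 unfolding riemannian_metric_def by blast
  have "2 * (1 - mu) * gval g x w w = 0"
    using cyc unfolding nabla_ricci_formula[OF U K x S N xs Ws Ws] nabla_ricci_formula[OF U K x S N Ws Ws xs]
      nabla_ricci_formula[OF U K x S N Ws xs Ws]
    by (simp add: gwx gxw ex1 w1 algebra_simps)
  then have mu: "mu = 1" using gww by simp
  show "scal g x = (p x + 2 / (2 * real n + 1)) - 4 * real n + 2 * lam + 2"
    using soliton_c[OF U K x S N] mu by simp
qed


end
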